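(* Let $A$ be an $n\times n$ Dickson matrix over $\mathbb{F}_{q^n}$ and, for $1\le k\le n$, let $A_{k-1}=A[\{0,1,\dots,k-1\}|\{0,1,\dots,k-1\}]$. Then $\mathrm{rank}\,A=\max\{k\in\{1,\dots,n\}:\det A_{k-1}\neq 0\}$ (with the value $0$ if no such $k$ exists).
   Context: Rows and columns are indexed by $\mathbb{Z}_n$. A Dickson matrix is the matrix $A$ with $A[i|j]=a_{j-i}^{q^i}$ (indices mod $n$) associated to a $q$-polynomial $\sum_{j=0}^{n-1}a_jx^{q^j}\in\mathbb{F}_{q^n}[x]$. $A[\alpha|\beta]$ denotes the submatrix with rows $\alpha$ and columns $\beta$. *)

theory Defs
  imports "Jordan_Normal_Form.DL_Rank" "Jordan_Normal_Form.DL_Submatrix"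
    "HOL-Computational_Algebra.Primes"
begin

text \<open>Dickson matrix of the q-polynomial sum_{j<n} a_j x^(q^j) over a field:
  entry (i,j) is a_((j - i) mod n)^(q^i), rows/columns indexed by 0..n-1.\<close>
definition dickson_mat :: "nat \<Rightarrow> nat \<Rightarrow> (nat \<Rightarrow> 'a::field) \<Rightarrow> 'a mat" where
  "dickson_mat q n a = mat n n (\<lambda>(i, j). a ((j + n - i) mod n) ^ (q ^ i))"

definition lead_submat :: "'a mat \<Rightarrow> nat \<Rightarrow> 'a mat" where
  "lead_submat A k = submatrix A {0..<k} {0..<k}"

end

theory Submission
  imports Defs "Jordan_Normal_Form.DL_Rank_Submatrix" "HOL-Number_Theory.Residues"
begin

lemma field_finite_power_card:
  fixes x :: "'a :: {field,finite}"
  shows   "x ^ card (UNIV :: 'a set) = x"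
proof (cases "x = 0")
  case False
  have "x * (\<Prod>y\<in>UNIV-{0}. x * y) = x * x ^ (card (UNIV :: 'a set) - 1) * \<Prod>(UNIV-{0})"
    by (simp add: prod.distrib mult_ac)
  also have "x * x ^ (card (UNIV :: 'a set) - 1) = x ^ Suc (card (UNIV :: 'a set) - 1)"
    by (subst power_Suc) auto
  also have "Suc (card (UNIV :: 'a set) - 1) = card (UNIV :: 'a set)"
    using finite_UNIV_card_ge_0[where ?'a = 'a] by simp
  also have "(\<Prod>y\<in>UNIV-{0}. x * y) = (\<Prod>y\<in>UNIV-{0}. y)"
    by (rule prod.reindex_bij_witness[of _ "\<lambda>y. y / x" "\<lambda>y. x * y"]) (use False in auto)
  finally show ?thesis
    by simp
qed (use finite_UNIV_card_ge_0[where ?'a = 'a] in auto)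

lemma char_eq:
  assumes "prime p" "m \<ge> 1" "n \<ge> 1" "card (UNIV :: 'a::{field,finite} set) = (p^m)^n"
  shows "CHAR('a) = p"
proof -
  have pos: "CHAR('a) > 0" by (simp add: finite_imp_CHAR_pos)
  have pr: "prime CHAR('a)" using pos prime_CHAR_semidom by blast
  have "CHAR('a) dvd p ^ (m*n)" using CHAR_dvd_CARD[where 'a='a] assms(4) by (simp add: power_mult)
  then have "CHAR('a) dvd p" using pr prime_dvd_power by blast
  then show ?thesis using pr assms(1) primes_dvd_imp_eq by blast
qed

lemma frob_sum:
  assumes "prime p" "m \<ge> 1" "n \<ge> 1" "card (UNIV :: 'a::{field,finite} set) = q^n" "q = p^m"
  shows "(sum g A :: 'a) ^ q = sum (\<lambda>i. g i ^ q) A"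
proof -
  have c: "CHAR('a) = p" using char_eq assms by blast
  show ?thesis by (rule freshmans_dream_sum'[where n=m]) (use c assms in auto)
qed

definition inspan :: "(nat \<Rightarrow> nat \<Rightarrow> 'a::field) \<Rightarrow> nat \<Rightarrow> nat \<Rightarrow> (nat \<Rightarrow> 'a) \<Rightarrow> bool" where
  "inspan F n k v \<longleftrightarrow> (\<exists>x. \<forall>i<n. v i = (\<Sum>l<k. x l * F i l))"

lemma inspan_cong: "inspan F n k v \<Longrightarrow> (\<And>i. i<n \<Longrightarrow> v i = w i) \<Longrightarrow> inspan F n k w"
  unfolding inspan_def by metis

lemma inspan_lincomb:
  fixes m :: nat
  assumes "\<And>l. l<m \<Longrightarrow> inspan F n k (g l)"
  shows "inspan F n k (\<lambda>i. \<Sum>l<m. c l * g l i)"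
  using assms
proof (induction m)
  case 0
  show ?case unfolding inspan_def by (rule exI[of _ "\<lambda>_. 0"]) simp
next
  case (Suc m)
  obtain x where x: "\<forall>i<n. (\<Sum>l<m. c l * g l i) = (\<Sum>l<k. x l * F i l)"
    using Suc unfolding inspan_def by force
  obtain y where y: "\<forall>i<n. g m i = (\<Sum>l<k. y l * F i l)"
    using Suc.prems[of m] unfolding inspan_def by force
  show ?case unfolding inspan_def
  proof (rule exI[of _ "\<lambda>l. x l + c m * y l"], intro allI impI)
    fix i assume i: "i < n"
    have "(\<Sum>l<Suc m. c l * g l i) = (\<Sum>l<m. c l * g l i) + c m * g m i" by simp
    also have "\<dots> = (\<Sum>l<k. x l * F i l) + c m * (\<Sum>l<k. y l * F i l)" using x y i by simp
    also have "\<dots> = (\<Sum>l<k. (x l + c m * y l) * F i l)"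
      by (simp add: sum.distrib sum_distrib_left algebra_simps)
    finally show "(\<Sum>l<Suc m. c l * g l i) = (\<Sum>l<k. (x l + c m * y l) * F i l)" .
  qed
qed

lemma inspan_col: "j < k \<Longrightarrow> inspan F n k (\<lambda>i. F i j)"
  unfolding inspan_def
proof (rule exI[of _ "\<lambda>l. if l = j then 1 else 0"], intro allI impI)
  fix i assume "j < k"
  have "(\<Sum>l<k. (if l = j then 1 else 0) * F i l) = (\<Sum>l<k. if l = j then F i l else 0)"
    by (rule sum.cong) auto
  also have "\<dots> = F i j" using \<open>j < k\<close> by (simp add: sum.delta')
  finally show "F i j = (\<Sum>l<k. (if l = j then 1 else 0) * F i l)" by simp
qed

definition kc :: "(nat \<Rightarrow> nat \<Rightarrow> 'a::field) \<Rightarrow> nat \<Rightarrow> nat" where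
  "kc F n = (LEAST j. j = n \<or> (j < n \<and> inspan F n j (\<lambda>i. F i j)))"

lemma kc_le: "kc F n \<le> n"
  unfolding kc_def by (rule Least_le) simp

lemma kc_span: "kc F n < n \<Longrightarrow> inspan F n (kc F n) (\<lambda>i. F i (kc F n))"
  using LeastI[of "\<lambda>j. j = n \<or> (j < n \<and> inspan F n j (\<lambda>i. F i j))" n]
  unfolding kc_def by auto

lemma kc_min: "t < kc F n \<Longrightarrow> \<not> inspan F n t (\<lambda>i. F i t)"
  using not_less_Least[of t "\<lambda>j. j = n \<or> (j < n \<and> inspan F n j (\<lambda>i. F i j))"] kc_le[of F n]
  unfolding kc_def by auto

lemma L1:
  fixes F :: "nat \<Rightarrow> nat \<Rightarrow> 'a::field"
  assumes frob: "\<And>(g::nat \<Rightarrow> 'a) m. (\<Sum>l<m. g l) ^ q = (\<Sum>l<m. g l ^ q)"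
    and tau: "\<And>i j. i < n \<Longrightarrow> Suc j < n \<Longrightarrow> F i (Suc j) = F ((i + n - 1) mod n) j ^ q"
    and j: "j < n"
  shows "inspan F n (kc F n) (\<lambda>i. F i j)"
proof (cases "j < kc F n")
  case True then show ?thesis by (rule inspan_col)
next
  case False
  define k where "k = kc F n"
  have main: "k + d < n \<Longrightarrow> inspan F n k (\<lambda>i. F i (k + d))" for d
  proof (induction d)
    case 0 then show ?case using kc_span[of F n] by (simp add: k_def)
  next
    case (Suc d)
    then obtain x where x: "\<forall>i<n. F i (k + d) = (\<Sum>l<k. x l * F i l)"
      unfolding inspan_def by auto
    have cols: "inspan F n k (\<lambda>i. F i (Suc l))" if "l < k" for l
    proof (cases "Suc l < k")
      case True then show ?thesis by (rule inspan_col)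
    next
      case False then have "Suc l = k" using that by simp
      then show ?thesis using kc_span[of F n] Suc.prems by (simp add: k_def)
    qed
    have "inspan F n k (\<lambda>i. \<Sum>l<k. x l ^ q * F i (Suc l))"
      by (rule inspan_lincomb) (rule cols)
    then show ?case
    proof (rule inspan_cong)
      fix i assume i: "i < n"
      have i': "(i + n - 1) mod n < n" using i by simp
      have "F i (k + Suc d) = F ((i + n - 1) mod n) (k + d) ^ q"
        using tau[OF i, of "k+d"] Suc.prems by simp
      also have "\<dots> = (\<Sum>l<k. x l * F ((i + n - 1) mod n) l) ^ q" using x i' by simp
      also have "\<dots> = (\<Sum>l<k. x l ^ q * F ((i + n - 1) mod n) l ^ q)"
        by (simp add: frob power_mult_distrib)
      also have "\<dots> = (\<Sum>l<k. x l ^ q * F i (Suc l))"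
        using tau[OF i] Suc.prems by (intro sum.cong) auto
      finally show "(\<Sum>l<k. x l ^ q * F i (Suc l)) = F i (k + Suc d)" by simp
    qed
  qed
  have "j = k + (j - k)" using False by (simp add: k_def)
  then show ?thesis using main[of "j - k"] j by (simp add: k_def)
qed


lemma rank_sum_rank1:
  "vec_space.rank n (mat n n (\<lambda>(i,j). \<Sum>l<k. g l i * (h l j :: 'a::field))) \<le> k"
proof (induction k)
  case 0
  have e0: "mat n n (\<lambda>(i,j). \<Sum>l<0. g l i * (h l j :: 'a)) = 0\<^sub>m n n"
    by (rule eq_matI) auto
  have r0: "vec_space.rank n (0\<^sub>m n n :: 'a mat) = 0" by (rule vec_space.rank_0I)
  show ?case unfolding e0 r0 by simp
next
  case (Suc k)
  have e: "mat n n (\<lambda>(i,j). \<Sum>l<Suc k. g l i * h l j) =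
        mat n n (\<lambda>(i,j). \<Sum>l<k. g l i * h l j) + mat n n (\<lambda>(i,j). g k i * h k j)"
    by (rule eq_matI) (simp_all)
  have r1: "vec_space.rank n (mat n n (\<lambda>(i,j). g k i * (h k j :: 'a))) \<le> 1"
    by (rule vec_space.rank_le_1_product_entries[where f="g k" and g="h k" and nc=n]) simp_all
  have r2: "vec_space.rank n (mat n n (\<lambda>(i,j). \<Sum>l<k. g l i * h l j) + mat n n (\<lambda>(i,j). g k i * (h k j :: 'a)))
     \<le> vec_space.rank n (mat n n (\<lambda>(i,j). \<Sum>l<k. g l i * h l j)) + vec_space.rank n (mat n n (\<lambda>(i,j). g k i * (h k j :: 'a)))"
    by (rule vec_space.rank_subadditive[where nc=n]) simp_all
  show ?case using Suc.IH r1 r2 unfolding e by linarith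
qed
lemma rank_le_decomp:
  assumes "\<And>i j. i < n \<Longrightarrow> j < n \<Longrightarrow> F i j = (\<Sum>l<k. g l i * (h l j :: 'a::field))"
  shows "vec_space.rank n (mat n n (\<lambda>(i,j). F i j)) \<le> k"
proof -
  have e: "mat n n (\<lambda>(i,j). F i j) = mat n n (\<lambda>(i,j). \<Sum>l<k. g l i * h l j)"
    by (rule eq_matI) (auto simp: assms)
  show ?thesis unfolding e by (rule rank_sum_rank1)
qed

lemma rank_le_cols:
  assumes "\<And>j. j < n \<Longrightarrow> inspan F n k (\<lambda>i. F i j)"
  shows "vec_space.rank n (mat n n (\<lambda>(i,j). F i j)) \<le> k"
proof -
  have "\<forall>j\<in>{..<n}. \<exists>x. \<forall>i<n. F i j = (\<Sum>l<k. x l * F i l)"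
    using assms unfolding inspan_def by auto
  from bchoice[OF this] obtain x where x: "\<forall>j\<in>{..<n}. \<forall>i<n. F i j = (\<Sum>l<k. x j l * F i l)"
    by blast
  show ?thesis by (rule rank_le_decomp[where g="\<lambda>l i. F i l" and h="\<lambda>l j. x j l"]) (simp add: x mult.commute)
qed

lemma rank_le_rows:
  assumes "\<And>i. i < n \<Longrightarrow> inspan (\<lambda>i j. F j i) n k (\<lambda>j. F i j)"
  shows "vec_space.rank n (mat n n (\<lambda>(i,j). F i j)) \<le> k"
proof -
  have "\<forall>i\<in>{..<n}. \<exists>y. \<forall>j<n. F i j = (\<Sum>l<k. y l * F l j)"
    using assms unfolding inspan_def by auto
  from bchoice[OF this] obtain y where y: "\<forall>i\<in>{..<n}. \<forall>j<n. F i j = (\<Sum>l<k. y i l * F l j)"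
    by blast
  show ?thesis by (rule rank_le_decomp[where g="\<lambda>l i. y i l" and h="\<lambda>l j. F l j"]) (simp add: y)
qed

lemma L3:
  fixes F :: "nat \<Rightarrow> nat \<Rightarrow> 'a::field"
  assumes rows: "\<And>i. i < n \<Longrightarrow> inspan (\<lambda>i j. F j i) n m (\<lambda>j. F i j)"
    and mk: "m \<le> kc F n" and mn: "m \<le> n"
  shows "det (mat m m (\<lambda>(i,j). F i j)) \<noteq> 0"
proof
  assume "det (mat m m (\<lambda>(i,j). F i j)) = 0"
  then obtain v where v: "v \<in> carrier_vec m" "v \<noteq> 0\<^sub>v m" "mat m m (\<lambda>(i,j). F i j) *\<^sub>v v = 0\<^sub>v m"
    using det_0_iff_vec_prod_zero_field[of "mat m m (\<lambda>(i,j). F i j)" m] by auto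
  have z: "(\<Sum>j<m. F i j * v$j) = 0" if i: "i < m" for i
  proof -
    have "(mat m m (\<lambda>(i,j). F i j) *\<^sub>v v) $ i = 0" using v(3) i by simp
    then show ?thesis using i v(1) by (simp add: scalar_prod_def atLeast0LessThan)
  qed
  have "\<forall>i\<in>{..<n}. \<exists>y. \<forall>j<n. F i j = (\<Sum>l<m. y l * F l j)"
    using rows unfolding inspan_def by auto
  from bchoice[OF this] obtain y where y: "\<forall>i\<in>{..<n}. \<forall>j<n. F i j = (\<Sum>l<m. y i l * F l j)"
    by blast
  have z2: "(\<Sum>j<m. F i j * v$j) = 0" if i: "i < n" for i
  proof -
    have yi: "\<And>j. j < n \<Longrightarrow> F i j = (\<Sum>l<m. y i l * F l j)" using y i by blast
    have "(\<Sum>j<m. F i j * v$j) = (\<Sum>j<m. (\<Sum>l<m. y i l * F l j) * v$j)"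
    proof (rule sum.cong[OF refl])
      fix j assume "j \<in> {..<m}"
      then have jn: "j < n" using mn by simp
      show "F i j * v$j = (\<Sum>l<m. y i l * F l j) * v$j" by (simp only: yi[OF jn])
    qed
    also have "\<dots> = (\<Sum>j<m. \<Sum>l<m. y i l * (F l j * v$j))"
      by (simp add: sum_distrib_right mult.assoc)
    also have "\<dots> = (\<Sum>l<m. \<Sum>j<m. y i l * (F l j * v$j))"
      by (rule sum.swap)
    also have "\<dots> = (\<Sum>l<m. y i l * (\<Sum>j<m. F l j * v$j))"
      by (simp add: sum_distrib_left)
    also have "\<dots> = 0" using z by simp
    finally show ?thesis .
  qed
  have "\<exists>t<m. v$t \<noteq> 0"
  proof (rule ccontr)
    assume "\<not> (\<exists>t<m. v$t \<noteq> 0)"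
    then have "v = 0\<^sub>v m" using v(1) by (intro eq_vecI) auto
    then show False using v(2) by simp
  qed
  define S where "S = {j. j < m \<and> v$j \<noteq> 0}"
  define T where "T = Max S"
  have finS: "finite S" unfolding S_def by simp
  have neS: "S \<noteq> {}" using \<open>\<exists>t<m. v$t \<noteq> 0\<close> unfolding S_def by auto
  have TS: "T \<in> S" unfolding T_def using finS neS by (rule Max_in)
  then have Tm: "T < m" and vT: "v$T \<noteq> 0" unfolding S_def by auto
  have above: "v$j = 0" if "T < j" "j < m" for j
  proof (rule ccontr)
    assume "v$j \<noteq> 0"
    then have "j \<in> S" using that unfolding S_def by auto
    then have "j \<le> T" unfolding T_def using finS by simp
    then show False using that by simp
  qed
  have "inspan F n T (\<lambda>i. F i T)"
    unfolding inspan_def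
  proof (rule exI[of _ "\<lambda>l. - v$l / v$T"], intro allI impI)
    fix i assume i: "i < n"
    have "(\<Sum>j<m. F i j * v$j) = (\<Sum>j<Suc T. F i j * v$j)"
      using Tm above by (intro sum.mono_neutral_right) auto
    also have "\<dots> = (\<Sum>j<T. F i j * v$j) + F i T * v$T" by simp
    finally have "(\<Sum>j<T. F i j * v$j) + F i T * v$T = 0" using z2[OF i] by simp
    then have "F i T = - (\<Sum>j<T. F i j * v$j) / v$T" using vT by (simp add: field_simps add_eq_0_iff)
    also have "\<dots> = (\<Sum>l<T. - v$l / v$T * F i l)"
      by (simp add: sum_divide_distrib sum_negf[symmetric] field_simps)
    finally show "F i T = (\<Sum>l<T. - v$l / v$T * F i l)" .
  qed
  moreover have "\<not> inspan F n T (\<lambda>i. F i T)" using kc_min[of T F n] Tm mk by simp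
  ultimately show False by simp
qed

lemma lead_submat_mat:
  assumes "k \<le> n"
  shows "lead_submat (mat n n f) k = mat k k f"
proof -
  have c: "{i. i < n \<and> i < k} = {0..<k}" using assms by auto
  have p: "pick {0..<k} i = i" if "i < k" for i
  proof -
    have "{a \<in> {0..<k}. a < i} = {0..<i}" using that by auto
    then have "card {a \<in> {0..<k}. a < i} = i" by simp
    then show ?thesis using pick_card_in_set[of i "{0..<k}"] that by simp
  qed
  have cc: "card {i. i < dim_row (mat n n f) \<and> i \<in> {0..<k}} = k"
    using assms by (simp add: c)
  have cc2: "card {i. i < dim_col (mat n n f) \<and> i \<in> {0..<k}} = k"
    using assms by (simp add: c)
  show ?thesis
    unfolding lead_submat_def
  proof (rule eq_matI)
    show "dim_row (submatrix (mat n n f) {0..<k} {0..<k}) = dim_row (mat k k f)"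
      unfolding dim_submatrix cc by simp
    show "dim_col (submatrix (mat n n f) {0..<k} {0..<k}) = dim_col (mat k k f)"
      unfolding dim_submatrix cc2 by simp
    fix i j assume i: "i < dim_row (mat k k f)" and j: "j < dim_col (mat k k f)"
    then have ik: "i < k" and jk: "j < k" by auto
    have "submatrix (mat n n f) {0..<k} {0..<k} $$ (i, j) = mat n n f $$ (pick {0..<k} i, pick {0..<k} j)"
      by (rule submatrix_index) (simp_all only: cc cc2 ik jk)
    also have "\<dots> = f (i, j)" using ik jk assms by (simp add: p)
    also have "\<dots> = mat k k f $$ (i, j)" using ik jk by simp
    finally show "submatrix (mat n n f) {0..<k} {0..<k} $$ (i, j) = mat k k f $$ (i, j)" .
  qed
qed


lemma pow_q_step: "(x ^ (q ^ j)) ^ q = (x::'a::monoid_mult) ^ (q ^ Suc j)"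
  by (simp only: power_mult[symmetric] power_Suc2)

lemma dickson_col_tau:
  fixes a :: "nat \<Rightarrow> 'a::{field,finite}"
  assumes pw: "\<And>x::'a. x ^ (q ^ n) = x" and i: "i < n" and j: "Suc j < n"
  shows "a ((Suc j + n - i) mod n) ^ (q ^ i) = (a ((j + n - (i + n - 1) mod n) mod n) ^ (q ^ ((i + n - 1) mod n))) ^ q"
proof (cases "i = 0")
  case True
  have m: "(i + n - 1) mod n = n - 1" using True i by simp
  have e1: "(Suc j + n - i) mod n = Suc j"
  proof -
    have "(Suc j + n - i) mod n = (Suc j + n) mod n" using True by simp
    also have "\<dots> = Suc j mod n" by (rule mod_add_self2)
    also have "\<dots> = Suc j" using j by simp
    finally show ?thesis .
  qed
  have e2: "(j + n - (n - 1)) mod n = Suc j" using j by simp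
  have sn: "Suc (n - 1) = n" using i by simp
  have "(a ((j + n - (i + n - 1) mod n) mod n) ^ (q ^ ((i + n - 1) mod n))) ^ q
      = (a (Suc j) ^ (q ^ (n - 1))) ^ q" by (simp only: m e2)
  also have "\<dots> = a (Suc j) ^ (q ^ Suc (n - 1))" by (rule pow_q_step)
  also have "\<dots> = a (Suc j)" by (simp only: sn pw)
  also have "\<dots> = a ((Suc j + n - i) mod n) ^ (q ^ i)" using e1 True by simp
  finally show ?thesis by (rule sym)
next
  case False
  have m: "(i + n - 1) mod n = i - 1"
  proof -
    have h: "i + n - 1 = (i - 1) + n" using False by simp
    have "(i + n - 1) mod n = ((i - 1) + n) mod n" by (simp only: h)
    also have "\<dots> = (i - 1) mod n" by (rule mod_add_self2)
    also have "\<dots> = i - 1" using i by simp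
    finally show ?thesis .
  qed
  have e: "j + n - (i - 1) = Suc j + n - i" using False i by simp
  have si: "Suc (i - 1) = i" using False by simp
  have "(a ((j + n - (i + n - 1) mod n) mod n) ^ (q ^ ((i + n - 1) mod n))) ^ q
      = (a ((Suc j + n - i) mod n) ^ (q ^ (i - 1))) ^ q" by (simp only: m e)
  also have "\<dots> = a ((Suc j + n - i) mod n) ^ (q ^ Suc (i - 1))" by (rule pow_q_step)
  also have "\<dots> = a ((Suc j + n - i) mod n) ^ (q ^ i)" by (simp only: si)
  finally show ?thesis by (rule sym)
qed

lemma dickson_row_tau:
  fixes a :: "nat \<Rightarrow> 'a::field"
  assumes i: "i < n" and j: "Suc j < n"
  shows "a ((i + n - Suc j) mod n) ^ (q ^ Suc j) = (a ((((i + n - 1) mod n) + n - j) mod n) ^ (q ^ j)) ^ q"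
proof -
  have idx: "(((i + n - 1) mod n) + n - j) mod n = (i + n - Suc j) mod n"
  proof (cases "i = 0")
    case True
    have m: "(i + n - 1) mod n = n - 1" using True i by simp
    have h: "n - 1 + n - j = (n - Suc j) + n" using j by simp
    have "(((i + n - 1) mod n) + n - j) mod n = ((n - Suc j) + n) mod n" by (simp only: m h)
    also have "\<dots> = (n - Suc j) mod n" by (rule mod_add_self2)
    also have "\<dots> = (i + n - Suc j) mod n" using True by simp
    finally show ?thesis .
  next
    case False
    have m: "(i + n - 1) mod n = i - 1"
    proof -
      have h: "i + n - 1 = (i - 1) + n" using False by simp
      have "(i + n - 1) mod n = ((i - 1) + n) mod n" by (simp only: h)
      also have "\<dots> = (i - 1) mod n" by (rule mod_add_self2)
      also have "\<dots> = i - 1" using i by simp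
      finally show ?thesis .
    qed
    have e: "i - 1 + n - j = i + n - Suc j" using False i by simp
    show ?thesis by (simp only: m e)
  qed
  show ?thesis by (simp only: idx pow_q_step)
qed

theorem mainTheorem7:
  fixes a :: "nat \<Rightarrow> 'a::{field,finite}" and q n :: nat
  assumes "n \<ge> 1"
    and "\<exists>p m. prime p \<and> m \<ge> 1 \<and> q = p ^ m"
    and "card (UNIV :: 'a set) = q ^ n"
  shows "vec_space.rank n (dickson_mat q n a) =
    (if \<exists>k\<in>{1..n}. det (lead_submat (dickson_mat q n a) k) \<noteq> 0
     then Max {k\<in>{1..n}. det (lead_submat (dickson_mat q n a) k) \<noteq> 0}
     else 0)"
proof -
  obtain p m where pm: "prime p" "m \<ge> 1" "q = p ^ m" using assms(2) by blast
  have frob: "\<And>(g::nat \<Rightarrow> 'a) M. (\<Sum>l<M. g l) ^ q = (\<Sum>l<M. g l ^ q)"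
    using frob_sum[OF pm(1) pm(2) assms(1) assms(3) pm(3)] by blast
  have pw: "x ^ (q ^ n) = x" for x :: 'a
    using field_finite_power_card[of x] assms(3) by simp
  define F where "F = (\<lambda>i j. a ((j + n - i) mod n) ^ (q ^ i))"
  define FT where "FT = (\<lambda>i j. F j i)"
  define A where "A = dickson_mat q n a"
  have A: "A = mat n n (\<lambda>(i,j). F i j)" unfolding A_def dickson_mat_def F_def by simp
  have tauF: "F i (Suc j) = F ((i + n - 1) mod n) j ^ q" if "i < n" "Suc j < n" for i j
    unfolding F_def by (rule dickson_col_tau[OF pw that])
  have tauFT: "FT i (Suc j) = FT ((i + n - 1) mod n) j ^ q" if "i < n" "Suc j < n" for i j
    unfolding FT_def F_def by (rule dickson_row_tau[OF that])
  define kC where "kC = kc F n"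
  define kR where "kR = kc FT n"
  define mm where "mm = min kC kR"
  have colF: "inspan F n kC (\<lambda>i. F i j)" if "j < n" for j
    unfolding kC_def
    apply (rule L1[where q=q])
      apply (rule frob)
     apply (rule tauF; assumption)
    apply (rule that)
    done
  have colFT: "inspan FT n kR (\<lambda>i. FT i j)" if "j < n" for j
    unfolding kR_def
    apply (rule L1[where q=q])
      apply (rule frob)
     apply (rule tauFT; assumption)
    apply (rule that)
    done
  have rows: "inspan (\<lambda>i j. F j i) n kR (\<lambda>j. F i j)" if "i < n" for i
    using colFT[OF that] unfolding FT_def .
  have r1: "vec_space.rank n A \<le> kC" unfolding A by (rule rank_le_cols[OF colF])
  have r2: "vec_space.rank n A \<le> kR" unfolding A by (rule rank_le_rows[OF rows])
  have mmn: "mm \<le> n" unfolding mm_def kC_def using kc_le[of F n] by simp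
  have detne: "det (mat mm mm (\<lambda>(i,j). F i j)) \<noteq> 0"
  proof (cases "kR \<le> kC")
    case True
    then have "mm = kR" unfolding mm_def by simp
    then show ?thesis using L3[of n F mm] rows mmn True unfolding kC_def by simp
  next
    case False
    then have mmC: "mm = kC" unfolding mm_def by simp
    have rowsT: "inspan (\<lambda>i j. FT j i) n mm (\<lambda>j. FT i j)" if "i < n" for i
      using colF[OF that] mmC unfolding FT_def by simp
    have "det (mat mm mm (\<lambda>(i,j). FT i j)) \<noteq> 0"
      by (rule L3[OF rowsT]) (use False mmC mmn in \<open>simp_all add: kR_def\<close>)
    moreover have "mat mm mm (\<lambda>(i,j). FT i j) = transpose_mat (mat mm mm (\<lambda>(i,j). F i j))"
      unfolding FT_def by (rule eq_matI) auto
    moreover have "det (transpose_mat (mat mm mm (\<lambda>(i,j). F i j))) = det (mat mm mm (\<lambda>(i,j). F i j))"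
      by (rule det_transpose) (rule mat_carrier)
    ultimately show ?thesis by simp
  qed
  have lead: "lead_submat A k = mat k k (\<lambda>(i,j). F i j)" if "k \<le> n" for k
    unfolding A by (rule lead_submat_mat[OF that])
  have lower: "k \<le> vec_space.rank n A" if "k \<le> n" "det (lead_submat A k) \<noteq> 0" for k
  proof -
    have "card {j. j < n \<and> j \<in> {0..<k}} \<le> vec_space.rank n A"
      by (rule vec_space.rank_gt_minor[of A n n "{0..<k}"])
         (use that in \<open>simp_all add: A lead_submat_def\<close>)
    moreover have "{j. j < n \<and> j \<in> {0..<k}} = {0..<k}" using that by auto
    ultimately show ?thesis by simp
  qed
  have rk: "vec_space.rank n A = mm"
  proof -
    have "mm \<le> vec_space.rank n A" using lower[OF mmn] detne lead[OF mmn] by simp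
    moreover have "vec_space.rank n A \<le> mm" using r1 r2 unfolding mm_def by simp
    ultimately show ?thesis by simp
  qed
  let ?S = "{k\<in>{1..n}. det (lead_submat A k) \<noteq> 0}"
  have fin: "vec_space.rank n A = (if \<exists>k\<in>{1..n}. det (lead_submat A k) \<noteq> 0 then Max ?S else 0)"
  proof (cases "\<exists>k\<in>{1..n}. det (lead_submat A k) \<noteq> 0")
    case True
    then obtain k0 where k0: "k0 \<in> {1..n}" "det (lead_submat A k0) \<noteq> 0" by blast
    then have "1 \<le> mm" using lower[of k0] rk by simp
    then have mmS: "mm \<in> ?S" using mmn detne lead[OF mmn] by simp
    have MS: "Max ?S = mm"
    proof (rule Max_eqI)
      show "finite ?S" by simp
      show "y \<le> mm" if "y \<in> ?S" for y using that lower[of y] rk by simp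
      show "mm \<in> ?S" by (rule mmS)
    qed
    show ?thesis by (simp only: if_P[OF True] rk MS)
  next
    case False
    have m0: "mm = 0"
    proof (rule ccontr)
      assume "mm \<noteq> 0"
      then have "mm \<in> {1..n}" using mmn by simp
      moreover have "\<forall>k\<in>{1..n}. det (lead_submat A k) = 0" using False by simp
      ultimately have "det (lead_submat A mm) = 0" by (rule bspec[rotated])
      then show False using detne lead[OF mmn] by simp
    qed
    show ?thesis by (simp only: if_not_P[OF False] rk m0)
  qed
  show ?thesis using fin unfolding A_def .
qed

end
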